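(* For every $k\ge1$ and every vector $\vec v_0$ of natural numbers over the counters of $\mathcal B_k$ such that $\vec v_0(d_i)=\vec v_0(d'_i)=0$ for all $i<k$, the BVASS $\mathcal B_k$ has a $(q^{\mathrm{init}}_k,\vec v_0)$-rooted $\{q^{\mathrm{leaf}}\}$-leaf-covering deduction tree if and only if $\vec v_0(d_k)\ge\mathrm{tower}(k)$.
   Context: A BVASS of dimension $D$ with counters indexed by a finite set consists of a finite set of states, unary rules $q\xrightarrow{\vec u}q_1$ with $\vec u\in\mathbb Z^D$, and split rules $q\to q_1+q_2$. A deduction tree is a finite tree labelled by configurations $(q,\vec v)$, $\vec v\in\mathbb N^D$, where each internal node $(q,\vec v)$ has either one child $(q_1,\vec v+\vec u)$ (with $\vec v+\vec u\ge\vec 0$) for a unary rule $(q,\vec u,q_1)$, or two children $(q_1,\vec v_1),(q_2,\vec v_2)$ with $\vec v_1+\vec v_2=\vec v$ for a split rule $(q,q_1,q_2)$. It is $(q,\vec v)$-rooted if its root is labelled $(q,\vec v)$ and $Q_\ell$-leaf-covering if the state of every leaf label is in $Q_\ell$ (no condition on vectors). $\mathrm{tower}(0)=1$, $\mathrm{tower}(n+1)=2^{\mathrm{tower}(n)}$. The BVASS $\mathcal B_k$ has counters $d_1,\dots,d_k,d'_1,\dots,d'_{k-1}$, defined recursively. $\mathcal B_1$ has states $q^{\mathrm{init}}_1,q^{\mathrm{leaf}}$ and one unary rule $q^{\mathrm{init}}_1\xrightarrow{-2\vec e_{d_1}}q^{\mathrm{leaf}}$. For $k>1$, $\mathcal B_k$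 consists of $\mathcal B_{k-1}$ plus new states $q^{\mathrm{init}}_k,q^1_k,q^2_k,q^{\mathrm{loop}}_k$ and rules: $q^{\mathrm{init}}_k\xrightarrow{\vec e_{d_{k-1}}}q^1_k$; $q^1_k\xrightarrow{-\vec e_{d_{k-1}}+2\vec e_{d'_{k-1}}}q^1_k$; $q^1_k\xrightarrow{\vec 0}q^2_k$; $q^2_k\xrightarrow{-\vec e_{d'_{k-1}}+\vec e_{d_{k-1}}}q^2_k$; split $q^2_k\to q^{\mathrm{loop}}_k+q^{\mathrm{loop}}_k$; $q^{\mathrm{loop}}_k\xrightarrow{\vec 0}q^{\mathrm{init}}_k$; and $q^{\mathrm{loop}}_k\xrightarrow{-\vec e_{d_k}}q^{\mathrm{init}}_{k-1}$. Here $\vec e_c$ denotes the unit vector for counter $c$. *)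

theory Defs
  imports Main
begin

text \<open>Vectors of N^D are represented as functions 'c => nat that vanish outside the
counter set.\<close>

record ('q, 'c) bvass =
  ctrs   :: "'c set"
  states :: "'q set"
  urules :: "('q \<times> ('c \<Rightarrow> int) \<times> 'q) set"
  srules :: "('q \<times> 'q \<times> 'q) set"

datatype ('q, 'c) dtree =
    DLeaf 'q "'c \<Rightarrow> nat"
  | DUn 'q "'c \<Rightarrow> nat" "('q, 'c) dtree"
  | DSplit 'q "'c \<Rightarrow> nat" "('q, 'c) dtree" "('q, 'c) dtree"

fun root :: "('q, 'c) dtree \<Rightarrow> 'q \<times> ('c \<Rightarrow> nat)" where
  "root (DLeaf q v) = (q, v)"
| "root (DUn q v t) = (q, v)"
| "root (DSplit q v t1 t2) = (q, v)"

definition is_config :: "('q, 'c) bvass \<Rightarrow> 'q \<Rightarrow> ('c \<Rightarrow> nat) \<Rightarrow> bool" where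
  "is_config B q v \<longleftrightarrow> q \<in> states B \<and> (\<forall>c. c \<notin> ctrs B \<longrightarrow> v c = 0)"

inductive is_dtree :: "('q, 'c) bvass \<Rightarrow> ('q, 'c) dtree \<Rightarrow> bool" for B where
  leaf: "is_config B q v \<Longrightarrow> is_dtree B (DLeaf q v)"
| unary: "\<lbrakk> is_config B q v; (q, u, q1) \<in> urules B; is_dtree B t;
            root t = (q1, w); \<forall>c. int (w c) = int (v c) + u c \<rbrakk>
          \<Longrightarrow> is_dtree B (DUn q v t)"
| split: "\<lbrakk> is_config B q v; (q, q1, q2) \<in> srules B; is_dtree B t1; is_dtree B t2;
            root t1 = (q1, v1); root t2 = (q2, v2); \<forall>c. v1 c + v2 c = v c \<rbrakk>
          \<Longrightarrow> is_dtree B (DSplit q v t1 t2)"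

fun leaf_states :: "('q, 'c) dtree \<Rightarrow> 'q set" where
  "leaf_states (DLeaf q v) = {q}"
| "leaf_states (DUn q v t) = leaf_states t"
| "leaf_states (DSplit q v t1 t2) = leaf_states t1 \<union> leaf_states t2"

definition leaf_covering :: "'q set \<Rightarrow> ('q, 'c) dtree \<Rightarrow> bool" where
  "leaf_covering Ql t \<longleftrightarrow> leaf_states t \<subseteq> Ql"

datatype ctr = d nat | d' nat

datatype st = QInit nat | Q1 nat | Q2 nat | QLoop nat | QLeaf

definition e :: "ctr \<Rightarrow> ctr \<Rightarrow> int" where
  "e c = (\<lambda>x. if x = c then 1 else 0)"

fun tower :: "nat \<Rightarrow> nat" where
  "tower 0 = 1"
| "tower (Suc n) = 2 ^ tower n"

text \<open>B 0 is a dummy (only k >= 1 is meaningful). B (Suc (Suc j)) is B_k for k = j+2,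
built from B_{k-1} = B (Suc j).\<close>

fun B :: "nat \<Rightarrow> (st, ctr) bvass" where
  "B 0 = \<lparr> ctrs = {}, states = {}, urules = {}, srules = {} \<rparr>"
| "B (Suc 0) = \<lparr> ctrs = {d 1}, states = {QInit 1, QLeaf},
                 urules = {(QInit 1, \<lambda>x. -2 * e (d 1) x, QLeaf)}, srules = {} \<rparr>"
| "B (Suc (Suc j)) = (let k = Suc (Suc j); P = B (Suc j) in
     \<lparr> ctrs = ctrs P \<union> {d k, d' (k - 1)},
       states = states P \<union> {QInit k, Q1 k, Q2 k, QLoop k},
       urules = urules P \<union>
         { (QInit k, e (d (k - 1)), Q1 k),
           (Q1 k, \<lambda>x. - e (d (k - 1)) x + 2 * e (d' (k - 1)) x, Q1 k),
           (Q1 k, \<lambda>x. 0, Q2 k),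
           (Q2 k, \<lambda>x. - e (d' (k - 1)) x + e (d (k - 1)) x, Q2 k),
           (QLoop k, \<lambda>x. 0, QInit k),
           (QLoop k, \<lambda>x. - e (d k) x, QInit (k - 1)) },
       srules = srules P \<union> { (Q2 k, QLoop k, QLoop k) } \<rparr>)"

end

theory Submission
  imports Defs
begin


lemma B_Suc_sub: "ctrs (B n) \<subseteq> ctrs (B (Suc n)) \<and> states (B n) \<subseteq> states (B (Suc n))
   \<and> urules (B n) \<subseteq> urules (B (Suc n)) \<and> srules (B n) \<subseteq> srules (B (Suc n))"
  by (cases n) (auto simp: Let_def)

lemma B_mono: assumes "k \<le> n"
  shows "ctrs (B k) \<subseteq> ctrs (B n)" "states (B k) \<subseteq> states (B n)"
    "urules (B k) \<subseteq> urules (B n)" "srules (B k) \<subseteq> srules (B n)"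
proof -
  show "ctrs (B k) \<subseteq> ctrs (B n)" using lift_Suc_mono_le[of "\<lambda>n. ctrs (B n)", OF _ assms] B_Suc_sub by blast
  show "states (B k) \<subseteq> states (B n)" using lift_Suc_mono_le[of "\<lambda>n. states (B n)", OF _ assms] B_Suc_sub by blast
  show "urules (B k) \<subseteq> urules (B n)" using lift_Suc_mono_le[of "\<lambda>n. urules (B n)", OF _ assms] B_Suc_sub by blast
  show "srules (B k) \<subseteq> srules (B n)" using lift_Suc_mono_le[of "\<lambda>n. srules (B n)", OF _ assms] B_Suc_sub by blast
qed

lemma B_lvl0:
  shows "ctrs (B (Suc (Suc j))) \<supseteq> {d (Suc (Suc j)), d (Suc (Suc j)-1), d' (Suc (Suc j)-1)}"
   "states (B (Suc (Suc j))) \<supseteq> {QInit (Suc (Suc j)), Q1 (Suc (Suc j)), Q2 (Suc (Suc j)), QLoop (Suc (Suc j)), QInit (Suc (Suc j)-1)}"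
   "urules (B (Suc (Suc j))) \<supseteq> (let k = Suc (Suc j) in { (QInit k, e (d (k - 1)), Q1 k),
           (Q1 k, \<lambda>x. - e (d (k - 1)) x + 2 * e (d' (k - 1)) x, Q1 k),
           (Q1 k, \<lambda>x. 0, Q2 k),
           (Q2 k, \<lambda>x. - e (d' (k - 1)) x + e (d (k - 1)) x, Q2 k),
           (QLoop k, \<lambda>x. 0, QInit k),
           (QLoop k, \<lambda>x. - e (d k) x, QInit (k - 1)) })"
   "srules (B (Suc (Suc j))) \<supseteq> {(Q2 (Suc (Suc j)), QLoop (Suc (Suc j)), QLoop (Suc (Suc j)))}"
proof -
  have a: "d (Suc j) \<in> ctrs (B (Suc j))" "QInit (Suc j) \<in> states (B (Suc j))"
    by (cases j; simp add: Let_def)+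
  then show "ctrs (B (Suc (Suc j))) \<supseteq> {d (Suc (Suc j)), d (Suc (Suc j)-1), d' (Suc (Suc j)-1)}"
   "states (B (Suc (Suc j))) \<supseteq> {QInit (Suc (Suc j)), Q1 (Suc (Suc j)), Q2 (Suc (Suc j)), QLoop (Suc (Suc j)), QInit (Suc (Suc j)-1)}"
    by (auto simp: Let_def)
qed (auto simp: Let_def)

lemma B_lvl: assumes "2 \<le> k" "k \<le> n"
  shows "d k \<in> ctrs (B n)" "d (k-1) \<in> ctrs (B n)" "d' (k-1) \<in> ctrs (B n)"
   "QInit k \<in> states (B n)" "Q1 k \<in> states (B n)" "Q2 k \<in> states (B n)" "QLoop k \<in> states (B n)" "QInit (k-1) \<in> states (B n)"
   "(QInit k, e (d (k - 1)), Q1 k) \<in> urules (B n)"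
   "(Q1 k, \<lambda>x. - e (d (k - 1)) x + 2 * e (d' (k - 1)) x, Q1 k) \<in> urules (B n)"
   "(Q1 k, \<lambda>x. 0, Q2 k) \<in> urules (B n)"
   "(Q2 k, \<lambda>x. - e (d' (k - 1)) x + e (d (k - 1)) x, Q2 k) \<in> urules (B n)"
   "(QLoop k, \<lambda>x. 0, QInit k) \<in> urules (B n)"
   "(QLoop k, \<lambda>x. - e (d k) x, QInit (k - 1)) \<in> urules (B n)"
   "(Q2 k, QLoop k, QLoop k) \<in> srules (B n)"
proof -
  have k: "Suc (Suc (k-2)) = k" using assms by simp
  note L = B_lvl0[of "k-2", unfolded k Let_def]
  note M = B_mono[OF assms(2)]
  show "d k \<in> ctrs (B n)" "d (k-1) \<in> ctrs (B n)" "d' (k-1) \<in> ctrs (B n)" by (rule subsetD[OF M(1)], rule subsetD[OF L(1)], simp)+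
  show "QInit k \<in> states (B n)" "Q1 k \<in> states (B n)" "Q2 k \<in> states (B n)" "QLoop k \<in> states (B n)" "QInit (k-1) \<in> states (B n)"
    by (rule subsetD[OF M(2)], rule subsetD[OF L(2)], simp)+
  show "(QInit k, e (d (k - 1)), Q1 k) \<in> urules (B n)"
   "(Q1 k, \<lambda>x. - e (d (k - 1)) x + 2 * e (d' (k - 1)) x, Q1 k) \<in> urules (B n)"
   "(Q1 k, \<lambda>x. 0, Q2 k) \<in> urules (B n)"
   "(Q2 k, \<lambda>x. - e (d' (k - 1)) x + e (d (k - 1)) x, Q2 k) \<in> urules (B n)"
   "(QLoop k, \<lambda>x. 0, QInit k) \<in> urules (B n)"
   "(QLoop k, \<lambda>x. - e (d k) x, QInit (k - 1)) \<in> urules (B n)"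
   "(Q2 k, QLoop k, QLoop k) \<in> srules (B n)"
    by (rule subsetD[OF M(3)], rule subsetD[OF L(3)], simp)+ (rule subsetD[OF M(4)], rule subsetD[OF L(4)], simp)
qed

lemma B_one: "1 \<le> n \<Longrightarrow> d 1 \<in> ctrs (B n) \<and> QInit 1 \<in> states (B n) \<and> QLeaf \<in> states (B n)
  \<and> (QInit 1, \<lambda>x. -2 * e (d 1) x, QLeaf) \<in> urules (B n)"
  using B_mono[of 1 n] by (auto simp: numeral_2_eq_2)

lemma urules_cases: "(q,u,q1) \<in> urules (B n) \<Longrightarrow>
   (q = QInit 1 \<and> u = (\<lambda>x. -2 * e (d 1) x) \<and> q1 = QLeaf) \<or>
   (\<exists>k\<ge>2. (q,u,q1) \<in> { (QInit k, e (d (k - 1)), Q1 k),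
           (Q1 k, \<lambda>x. - e (d (k - 1)) x + 2 * e (d' (k - 1)) x, Q1 k),
           (Q1 k, \<lambda>x. 0, Q2 k),
           (Q2 k, \<lambda>x. - e (d' (k - 1)) x + e (d (k - 1)) x, Q2 k),
           (QLoop k, \<lambda>x. 0, QInit k),
           (QLoop k, \<lambda>x. - e (d k) x, QInit (k - 1)) })"
proof (induction n rule: B.induct)
  case (3 j)
  then show ?case
    apply (simp only: B.simps Let_def bvass.simps Un_iff)
    apply (elim disjE)
     apply blast
    apply (rule disjI2, rule exI[of _ "Suc (Suc j)"])
    apply simp
    done
qed auto

lemma srules_cases: "(q,q1,q2) \<in> srules (B n) \<Longrightarrow> (\<exists>k\<ge>2. q = Q2 k \<and> q1 = QLoop k \<and> q2 = QLoop k)"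
proof (induction n rule: B.induct)
  case (3 j)
  then show ?case by (auto simp: Let_def)
qed auto




definition lowz :: "nat \<Rightarrow> (ctr \<Rightarrow> nat) \<Rightarrow> bool" where
  "lowz k v \<longleftrightarrow> (\<forall>i. 1 \<le> i \<and> i < k - 1 \<longrightarrow> v (d i) = 0 \<and> v (d' i) = 0)"

fun good :: "st \<Rightarrow> (ctr \<Rightarrow> nat) \<Rightarrow> bool" where
  "good (QInit k) v = (if k = 1 then 2 \<le> v (d 1) else (2 \<le> k \<longrightarrow> lowz k v \<longrightarrow>
      4 ^ tower (k-1) \<le> (v (d k))\<^sup>2 * 2 ^ (2 * v (d (k-1)) + v (d' (k-1)))))"
| "good (QLoop k) v = (2 \<le> k \<longrightarrow> lowz k v \<longrightarrow>
      4 ^ tower (k-1) \<le> (v (d k))\<^sup>2 * 2 ^ (2 * v (d (k-1)) + v (d' (k-1))))"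
| "good (Q1 k) v = (2 \<le> k \<longrightarrow> lowz k v \<longrightarrow>
      4 ^ (tower (k-1) + 1) \<le> (v (d k))\<^sup>2 * 2 ^ (2 * v (d (k-1)) + v (d' (k-1))))"
| "good (Q2 k) v = (2 \<le> k \<longrightarrow> lowz k v \<longrightarrow>
      4 ^ (tower (k-1) + 1) \<le> (v (d k))\<^sup>2 * 2 ^ (v (d (k-1)) + v (d' (k-1))))"
| "good QLeaf v = True"

lemma sq_le: "(a::nat)^2 \<le> b^2 \<Longrightarrow> a \<le> b"
  using power2_le_imp_le by blast

lemma four_pow: "(4::nat) ^ n = (2 ^ n)^2"
  by (metis power_mult_distrib power2_eq_square num_double numeral_times_numeral power_even_eq mult.commute)

lemma split_arith: fixes c1 c2 p1 q1 p2 q2 T :: nat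
  assumes "4^T \<le> c1^2 * 2^(2*p1+q1)" "4^T \<le> c2^2 * 2^(2*p2+q2)"
  shows "4^(T+1) \<le> (c1+c2)^2 * 2^(p1+q1+p2+q2)"
proof -
  have h: "2^T \<le> c * 2^(p+q)" if "4^T \<le> c^2 * 2^(2*p+q)" for c p q :: nat
  proof -
    have "c^2 * 2^(2*p+q) \<le> c^2 * 2^(2*p+2*q)" by simp
    also have "\<dots> = (c * 2^(p+q))^2"
      by (simp add: power_mult_distrib power_add power_mult[symmetric] mult.commute)
    finally have x: "c^2 * 2^(2*p+q) \<le> (c * 2^(p+q))^2" .
    have "(2^T)^2 \<le> c^2 * 2^(2*p+q)" using that four_pow by metis
    then have "(2^T)^2 \<le> (c * 2^(p+q))^2" using x by linarith
    then show ?thesis by (rule sq_le)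
  qed
  have a: "2^T \<le> c1 * 2^(p1+q1)" "2^T \<le> c2 * 2^(p2+q2)" using h assms by auto
  have "(4::nat)^(T+1) = 4 * (2^T * 2^T)" by (simp add: four_pow power2_eq_square)
  also have "\<dots> \<le> 4 * ((c1 * 2^(p1+q1)) * (c2 * 2^(p2+q2)))"
    using a mult_le_mono by simp
  also have "\<dots> = (4 * c1 * c2) * 2^(p1+q1+p2+q2)" by (simp add: power_add)
  also have "\<dots> \<le> (c1+c2)^2 * 2^(p1+q1+p2+q2)"
  proof -
    have "4 * c1 * c2 \<le> (c1+c2)^2"
    proof -
      have "int (4*c1*c2) \<le> int ((c1+c2)^2)"
        using zero_le_power2[of "int c1 - int c2"] by (simp add: power2_eq_square algebra_simps)
      then show ?thesis by linarith
    qed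
    then show ?thesis by simp
  qed
  finally show ?thesis .
qed




lemma e_simp[simp]: "e c x = (if x = c then 1 else 0)" by (simp add: e_def)

lemma lowz_tr: assumes "\<forall>c. int (w c) = int (v c) + u c"
  "\<forall>i. 1 \<le> i \<and> i < k - 1 \<longrightarrow> u (d i) = 0 \<and> u (d' i) = 0" "lowz k v"
  shows "lowz k w"
  using assms unfolding lowz_def by (metis add.right_neutral of_nat_eq_0_iff)

lemma lowz_mono: "lowz k w \<Longrightarrow> lowz (k-1) w" unfolding lowz_def by auto

lemma g_init: assumes k: "2 \<le> k" and g: "good (Q1 k) w"
  and H: "\<forall>c. int (w c) = int (v c) + e (d (k-1)) c"
  shows "good (QInit k) v"
proof -
  have ne: "k \<noteq> 1" "k - 1 \<noteq> k" using k by auto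
  have lz: "lowz k v \<Longrightarrow> lowz k w" by (rule lowz_tr[OF H]) (use k in auto)
  have a: "w (d (k-1)) = v (d (k-1)) + 1" "w (d' (k-1)) = v (d' (k-1))" "w (d k) = v (d k)"
    using H[rule_format, of "d (k-1)"] H[rule_format, of "d' (k-1)"] H[rule_format, of "d k"] ne by auto
  have "lowz k v \<Longrightarrow> 4 ^ tower (k-1) \<le> (v (d k))\<^sup>2 * 2 ^ (2 * v (d (k-1)) + v (d' (k-1)))"
  proof -
    assume "lowz k v"
    then have "4 ^ (tower (k-1) + 1) \<le> (v (d k))\<^sup>2 * 2 ^ (2 * (v (d (k-1)) + 1) + v (d' (k-1)))"
      using g lz k a by simp
    then have "4 * 4 ^ tower (k-1) \<le> 4 * ((v (d k))\<^sup>2 * 2 ^ (2 * v (d (k-1)) + v (d' (k-1))))"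
      by (simp add: power_add mult_ac)
    then show "4 ^ tower (k-1) \<le> (v (d k))\<^sup>2 * 2 ^ (2 * v (d (k-1)) + v (d' (k-1)))" by simp
  qed
  then show ?thesis using ne by simp
qed

lemma g_q1loop: assumes k: "2 \<le> k" and g: "good (Q1 k) w"
  and H: "\<forall>c. int (w c) = int (v c) + (- e (d (k - 1)) c + 2 * e (d' (k - 1)) c)"
  shows "good (Q1 k) v"
proof -
  have ne: "k - 1 \<noteq> k" using k by auto
  have lz: "lowz k v \<Longrightarrow> lowz k w" by (rule lowz_tr[OF H]) (use k in auto)
  have a: "w (d (k-1)) + 1 = v (d (k-1))" "w (d' (k-1)) = v (d' (k-1)) + 2" "w (d k) = v (d k)"
    using H[rule_format, of "d (k-1)"] H[rule_format, of "d' (k-1)"] H[rule_format, of "d k"] ne by auto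
  have "2 * v (d (k-1)) + v (d' (k-1)) = 2 * w (d (k-1)) + w (d' (k-1))" using a by simp
  then show ?thesis using g lz a by simp
qed

lemma g_q12: assumes k: "2 \<le> k" and g: "good (Q2 k) w"
  and H: "\<forall>c. int (w c) = int (v c) + 0"
  shows "good (Q1 k) v"
proof -
  have "w = v" using H by auto
  then show ?thesis using g
    by (auto intro: order_trans mult_le_mono)
qed

lemma g_q2loop: assumes k: "2 \<le> k" and g: "good (Q2 k) w"
  and H: "\<forall>c. int (w c) = int (v c) + (- e (d' (k - 1)) c + e (d (k - 1)) c)"
  shows "good (Q2 k) v"
proof -
  have ne: "k - 1 \<noteq> k" using k by auto
  have lz: "lowz k v \<Longrightarrow> lowz k w" by (rule lowz_tr[OF H]) (use k in auto)
  have a: "w (d (k-1)) = v (d (k-1)) + 1" "w (d' (k-1)) + 1 = v (d' (k-1))" "w (d k) = v (d k)"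
    using H[rule_format, of "d (k-1)"] H[rule_format, of "d' (k-1)"] H[rule_format, of "d k"] ne by auto
  have "v (d (k-1)) + v (d' (k-1)) = w (d (k-1)) + w (d' (k-1))" using a by simp
  then show ?thesis using g lz a by simp
qed

lemma g_loopinit: assumes k: "2 \<le> k" and g: "good (QInit k) w"
  and H: "\<forall>c. int (w c) = int (v c) + 0"
  shows "good (QLoop k) v"
proof -
  have "w = v" using H by auto
  then show ?thesis using g k by simp
qed

lemma g_loopdown: assumes k: "2 \<le> k" and g: "good (QInit (k-1)) w"
  and H: "\<forall>c. int (w c) = int (v c) + - e (d k) c"
  shows "good (QLoop k) v"
proof (simp only: good.simps, intro impI)
  assume lv: "lowz k v"
  have ne: "k - 1 \<noteq> k" using k by auto
  have lz: "lowz (k-1) w" by (rule lowz_mono, rule lowz_tr[OF H _ lv]) (use k in auto)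
  have a: "w (d (k-1)) = v (d (k-1))" "w (d k) + 1 = v (d k)"
    using H[rule_format, of "d (k-1)"] H[rule_format, of "d k"] ne by auto
  define T where "T = tower (k-1)"
  have xT: "T \<le> v (d (k-1))"
  proof (cases "k = 2")
    case True
    then show ?thesis using g a True by (simp add: T_def)
  next
    case False
    define j where "j = k - 3"
    have kj: "k = Suc (Suc (Suc j))" using k False unfolding j_def by simp
    have z0: "v (d (Suc j)) = 0" "v (d' (Suc j)) = 0" using lv unfolding lowz_def kj by auto
    have z: "w (d (Suc j)) = 0" "w (d' (Suc j)) = 0"
      using H[rule_format, of "d (Suc j)"] H[rule_format, of "d' (Suc j)"] z0 kj by auto
    have "4 ^ tower (Suc j) \<le> (w (d (Suc (Suc j))))\<^sup>2"
      using g lz z unfolding kj by simp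
    then have "(2 ^ tower (Suc j))\<^sup>2 \<le> (w (d (Suc (Suc j))))\<^sup>2" by (metis four_pow)
    then have "2 ^ tower (Suc j) \<le> w (d (Suc (Suc j)))" by (rule sq_le)
    moreover have "T = 2 ^ tower (Suc j)" unfolding T_def kj by simp
    ultimately show ?thesis using a kj by simp
  qed
  have c1: "1 \<le> v (d k)" using a by simp
  have "(4::nat) ^ T \<le> 4 ^ v (d (k-1))" using xT by (simp add: power_increasing)
  also have "\<dots> = 2 ^ (2 * v (d (k-1)))" by (simp add: power_mult)
  also have "\<dots> \<le> 2 ^ (2 * v (d (k-1)) + v (d' (k-1)))" by (simp add: power_increasing)
  also have "\<dots> \<le> (v (d k))\<^sup>2 * 2 ^ (2 * v (d (k-1)) + v (d' (k-1)))" using c1 by simp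
  finally show "4 ^ tower (k-1) \<le> (v (d k))\<^sup>2 * 2 ^ (2 * v (d (k-1)) + v (d' (k-1)))"
    by (simp add: T_def)
qed




lemma unary_good: assumes r: "(q,u,q1) \<in> urules (B n)" and g: "good q1 w"
  and H: "\<forall>c. int (w c) = int (v c) + u c" shows "good q v"
  using urules_cases[OF r]
proof (elim disjE exE conjE)
  assume eq: "q = QInit 1" "u = (\<lambda>x. - 2 * e (d 1) x)" "q1 = QLeaf"
  have "int (w (d 1)) = int (v (d 1)) - 2" using H[rule_format, of "d 1"] eq by simp
  then show ?thesis using eq by simp
next
  fix k assume k: "2 \<le> k" and m: "(q, u, q1) \<in> {(QInit k, e (d (k - 1)), Q1 k),
           (Q1 k, \<lambda>x. - e (d (k - 1)) x + 2 * e (d' (k - 1)) x, Q1 k),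
           (Q1 k, \<lambda>x. 0, Q2 k),
           (Q2 k, \<lambda>x. - e (d' (k - 1)) x + e (d (k - 1)) x, Q2 k),
           (QLoop k, \<lambda>x. 0, QInit k),
           (QLoop k, \<lambda>x. - e (d k) x, QInit (k - 1))}"
  from m show ?thesis
  proof (elim insertE)
    assume "(q, u, q1) = (QInit k, e (d (k - 1)), Q1 k)"
    then show ?thesis using g_init[OF k, of w v] g H by simp
  next
    assume "(q, u, q1) = (Q1 k, \<lambda>x. - e (d (k - 1)) x + 2 * e (d' (k - 1)) x, Q1 k)"
    then show ?thesis using g_q1loop[OF k, of w v] g H by simp
  next
    assume "(q, u, q1) = (Q1 k, \<lambda>x. 0, Q2 k)"
    then show ?thesis using g_q12[OF k, of w v] g H by simp
  next
    assume "(q, u, q1) = (Q2 k, \<lambda>x. - e (d' (k - 1)) x + e (d (k - 1)) x, Q2 k)"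
    then show ?thesis using g_q2loop[OF k, of w v] g H by simp
  next
    assume "(q, u, q1) = (QLoop k, \<lambda>x. 0, QInit k)"
    then show ?thesis using g_loopinit[OF k, of w v] g H by simp
  next
    assume "(q, u, q1) = (QLoop k, \<lambda>x. - e (d k) x, QInit (k - 1))"
    then show ?thesis using g_loopdown[OF k, of w v] g H by simp
  qed simp
qed

lemma split_good: assumes r: "(q,q1,q2) \<in> srules (B n)" and g1: "good q1 v1" and g2: "good q2 v2"
  and H: "\<forall>c. v1 c + v2 c = v c" shows "good q v"
proof -
  obtain k where k: "2 \<le> k" and eq: "q = Q2 k" "q1 = QLoop k" "q2 = QLoop k"
    using srules_cases[OF r] by blast
  have "lowz k v \<Longrightarrow> 4 ^ (tower (k-1) + 1) \<le> (v (d k))\<^sup>2 * 2 ^ (v (d (k-1)) + v (d' (k-1)))"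
  proof -
    assume lv: "lowz k v"
    have l1: "lowz k v1" "lowz k v2" using lv H unfolding lowz_def by (metis add_is_0)+
    have a1: "4 ^ tower (k-1) \<le> (v1 (d k))\<^sup>2 * 2 ^ (2 * v1 (d (k-1)) + v1 (d' (k-1)))"
      using g1 l1 k eq by simp
    have a2: "4 ^ tower (k-1) \<le> (v2 (d k))\<^sup>2 * 2 ^ (2 * v2 (d (k-1)) + v2 (d' (k-1)))"
      using g2 l1 k eq by simp
    have "4 ^ (tower (k-1) + 1) \<le> (v1 (d k) + v2 (d k))\<^sup>2 *
        2 ^ (v1 (d (k-1)) + v1 (d' (k-1)) + v2 (d (k-1)) + v2 (d' (k-1)))"
      by (rule split_arith[OF a1 a2])
    moreover have "v1 (d (k-1)) + v1 (d' (k-1)) + v2 (d (k-1)) + v2 (d' (k-1)) = v (d (k-1)) + v (d' (k-1))"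
      using H[rule_format, of "d (k-1)"] H[rule_format, of "d' (k-1)"] by simp
    ultimately show ?thesis using H[rule_format, of "d k"] by simp
  qed
  then show ?thesis using eq by simp
qed

lemma sound: "is_dtree (B n) t \<Longrightarrow> leaf_covering {QLeaf} t \<Longrightarrow> root t = (q,v) \<Longrightarrow> good q v"
proof (induction arbitrary: q v rule: is_dtree.induct)
  case (leaf q v)
  then show ?case by (auto simp: leaf_covering_def)
next
  case (unary q v u q1 t w)
  then have "good q1 w" by (simp add: leaf_covering_def)
  then show ?case using unary unary_good by auto
next
  case (split q v q1 q2 t1 t2 v1 v2)
  then have "good q1 v1" "good q2 v2" by (simp_all add: leaf_covering_def)
  then show ?case using split split_good by auto
qed

lemma soundness: assumes k: "k \<ge> 1"
    and z: "\<forall>i. 1 \<le> i \<and> i < k \<longrightarrow> v0 (d i) = 0 \<and> v0 (d' i) = 0"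
    and t: "is_dtree (B n) t" "root t = (QInit k, v0)" "leaf_covering {QLeaf} t"
  shows "tower k \<le> v0 (d k)"
proof -
  have g: "good (QInit k) v0" using sound t by blast
  show ?thesis
  proof (cases "k = 1")
    case True
    then show ?thesis using g by (simp add: numeral_2_eq_2)
  next
    case False
    define j where "j = k - 2"
    have kj: "k = Suc (Suc j)" using k False unfolding j_def by simp
    have lz: "lowz k v0" using z unfolding lowz_def by auto
    have zz: "v0 (d (Suc j)) = 0" "v0 (d' (Suc j)) = 0" using z kj by auto
    have "4 ^ tower (Suc j) \<le> (v0 (d k))\<^sup>2" using g lz zz kj by simp
    then have "(2 ^ tower (Suc j))\<^sup>2 \<le> (v0 (d k))\<^sup>2" by (metis four_pow)
    then have "2 ^ tower (Suc j) \<le> v0 (d k)" by (rule sq_le)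
    then show ?thesis using kj by simp
  qed
qed




definition ok :: "nat \<Rightarrow> st \<Rightarrow> (ctr \<Rightarrow> nat) \<Rightarrow> bool" where
  "ok n q v \<longleftrightarrow> (\<exists>t. is_dtree (B n) t \<and> root t = (q, v) \<and> leaf_covering {QLeaf} t)"

definition cfg :: "nat \<Rightarrow> (ctr \<Rightarrow> nat) \<Rightarrow> bool" where
  "cfg n v \<longleftrightarrow> (\<forall>c. c \<notin> ctrs (B n) \<longrightarrow> v c = 0)"

lemma ok_un: assumes "q \<in> states (B n)" "cfg n v" "(q,u,q1) \<in> urules (B n)" "ok n q1 w"
  "\<forall>c. int (w c) = int (v c) + u c" shows "ok n q v"
proof -
  obtain t where t: "is_dtree (B n) t" "root t = (q1, w)" "leaf_covering {QLeaf} t"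
    using assms(4) unfolding ok_def by blast
  have "is_dtree (B n) (DUn q v t)"
    by (rule is_dtree.unary[OF _ assms(3) t(1,2) assms(5)]) (use assms in \<open>simp add: is_config_def cfg_def\<close>)
  then show ?thesis unfolding ok_def using t(3)
    by (intro exI[of _ "DUn q v t"]) (auto simp: leaf_covering_def)
qed

lemma ok_split: assumes "q \<in> states (B n)" "cfg n v" "(q,q1,q2) \<in> srules (B n)" "ok n q1 v1" "ok n q2 v2"
  "\<forall>c. v1 c + v2 c = v c" shows "ok n q v"
proof -
  obtain t1 where t1: "is_dtree (B n) t1" "root t1 = (q1, v1)" "leaf_covering {QLeaf} t1"
    using assms(4) unfolding ok_def by blast
  obtain t2 where t2: "is_dtree (B n) t2" "root t2 = (q2, v2)" "leaf_covering {QLeaf} t2"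
    using assms(5) unfolding ok_def by blast
  have "is_dtree (B n) (DSplit q v t1 t2)"
    by (rule is_dtree.split[OF _ assms(3) t1(1) t2(1) t1(2) t2(2) assms(6)]) (use assms in \<open>simp add: is_config_def cfg_def\<close>)
  then show ?thesis unfolding ok_def using t1(3) t2(3)
    by (intro exI[of _ "DSplit q v t1 t2"]) (auto simp: leaf_covering_def)
qed

lemma ok_leaf: "QLeaf \<in> states (B n) \<Longrightarrow> cfg n v \<Longrightarrow> ok n QLeaf v"
  unfolding ok_def using is_dtree.leaf[of "B n" QLeaf v]
  by (intro exI[of _ "DLeaf QLeaf v"]) (simp add: is_config_def cfg_def leaf_covering_def)

lemma q1_iter: assumes k: "2 \<le> k" "k \<le> n"
  shows "\<forall>v. cfg n v \<longrightarrow> ok n (Q1 k) w \<longrightarrow> w (d (k-1)) + z = v (d (k-1)) \<longrightarrow>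
     w (d' (k-1)) = v (d' (k-1)) + 2 * z \<longrightarrow> (\<forall>c. c \<noteq> d (k-1) \<and> c \<noteq> d' (k-1) \<longrightarrow> w c = v c)
     \<longrightarrow> ok n (Q1 k) v"
proof (induction z)
  case 0
  show ?case
  proof (intro allI impI)
    fix v assume h: "ok n (Q1 k) w" "w (d (k-1)) + 0 = v (d (k-1))" "w (d' (k-1)) = v (d' (k-1)) + 2 * 0"
      "\<forall>c. c \<noteq> d (k-1) \<and> c \<noteq> d' (k-1) \<longrightarrow> w c = v c"
    have "w = v" using h(2-4) by (metis add_0 add.right_neutral mult_0_right ext)
    then show "ok n (Q1 k) v" using h(1) by simp
  qed
next
  case (Suc z)
  show ?case
  proof (intro allI impI)
    fix v assume cv: "cfg n v" and h: "ok n (Q1 k) w" "w (d (k-1)) + Suc z = v (d (k-1))"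
      "w (d' (k-1)) = v (d' (k-1)) + 2 * Suc z"
      "\<forall>c. c \<noteq> d (k-1) \<and> c \<noteq> d' (k-1) \<longrightarrow> w c = v c"
    define v1 where "v1 = v(d (k-1) := v (d (k-1)) - 1, d' (k-1) := v (d' (k-1)) + 2)"
    have cv1: "cfg n v1" using cv B_lvl[OF k] unfolding cfg_def v1_def by auto
    have "ok n (Q1 k) v1"
      using Suc.IH[rule_format, OF cv1 h(1)] h(2-4) unfolding v1_def by auto
    then show "ok n (Q1 k) v"
      by (rule ok_un[OF B_lvl(5)[OF k] cv B_lvl(10)[OF k]]) (use h(2) in \<open>auto simp: v1_def\<close>)
  qed
qed

lemma q2_iter: assumes k: "2 \<le> k" "k \<le> n"
  shows "\<forall>v. cfg n v \<longrightarrow> ok n (Q2 k) w \<longrightarrow> w (d (k-1)) = v (d (k-1)) + z \<longrightarrow>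
     w (d' (k-1)) + z = v (d' (k-1)) \<longrightarrow> (\<forall>c. c \<noteq> d (k-1) \<and> c \<noteq> d' (k-1) \<longrightarrow> w c = v c)
     \<longrightarrow> ok n (Q2 k) v"
proof (induction z)
  case 0
  show ?case
  proof (intro allI impI)
    fix v assume h: "ok n (Q2 k) w" "w (d (k-1)) = v (d (k-1)) + 0" "w (d' (k-1)) + 0 = v (d' (k-1))"
      "\<forall>c. c \<noteq> d (k-1) \<and> c \<noteq> d' (k-1) \<longrightarrow> w c = v c"
    have "w = v" using h(2-4) by (metis add_0 add.right_neutral ext)
    then show "ok n (Q2 k) v" using h(1) by simp
  qed
next
  case (Suc z)
  show ?case
  proof (intro allI impI)
    fix v assume cv: "cfg n v" and h: "ok n (Q2 k) w" "w (d (k-1)) = v (d (k-1)) + Suc z"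
      "w (d' (k-1)) + Suc z = v (d' (k-1))"
      "\<forall>c. c \<noteq> d (k-1) \<and> c \<noteq> d' (k-1) \<longrightarrow> w c = v c"
    define v1 where "v1 = v(d (k-1) := v (d (k-1)) + 1, d' (k-1) := v (d' (k-1)) - 1)"
    have cv1: "cfg n v1" using cv B_lvl[OF k] unfolding cfg_def v1_def by auto
    have "ok n (Q2 k) v1"
      using Suc.IH[rule_format, OF cv1 h(1)] h(2-4) unfolding v1_def by auto
    then show "ok n (Q2 k) v"
      by (rule ok_un[OF B_lvl(6)[OF k] cv B_lvl(12)[OF k]]) (use h(3) in \<open>auto simp: v1_def\<close>)
  qed
qed




lemma round: assumes k: "2 \<le> k" "k \<le> n" and cv: "cfg n v" and c: "2^(m+1) \<le> v (d k)"
  and P: "\<And>v'. cfg n v' \<Longrightarrow> v (d (k-1)) + 1 \<le> v' (d (k-1)) \<Longrightarrow> 2^m \<le> v' (d k) \<Longrightarrow> ok n (QLoop k) v'"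
  shows "ok n (QInit k) v"
proof -
  define x where "x = v (d (k-1))"
  define y where "y = v (d' (k-1))"
  have ne: "d k \<noteq> d (k-1)" using k by simp
  note L = B_lvl[OF k]
  define ch1 where "ch1 = v(d(k-1) := y + x + 1, d'(k-1) := 0, d k := v (d k) - 2^m)"
  define ch2 where "ch2 = (\<lambda>c'. if c' = d(k-1) then x+1 else if c' = d k then (2::nat)^m else 0)"
  have cf1: "cfg n ch1" using cv L unfolding cfg_def ch1_def by auto
  have cf2: "cfg n ch2" using L unfolding cfg_def ch2_def by auto
  have o1: "ok n (QLoop k) ch1" by (rule P[OF cf1]) (use c ne in \<open>auto simp: ch1_def x_def\<close>)
  have o2: "ok n (QLoop k) ch2" by (rule P[OF cf2]) (use c ne in \<open>auto simp: ch2_def x_def\<close>)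
  define v3 where "v3 = v(d(k-1) := y + 2*x + 2, d'(k-1) := 0)"
  have cf3: "cfg n v3" using cv L unfolding cfg_def v3_def by auto
  have "2^m \<le> v (d k)" using c by (metis le_add2 mult_2 order_trans power_Suc add.commute plus_1_eq_Suc)
  then have o3: "ok n (Q2 k) v3"
    by (intro ok_split[OF L(6) cf3 L(15) o1 o2]) (use k in \<open>auto simp: ch1_def ch2_def v3_def ne\<close>)
  define v2 where "v2 = v(d(k-1) := 0, d'(k-1) := y + 2*x + 2)"
  have cf2': "cfg n v2" using cv L unfolding cfg_def v2_def by auto
  have o4: "ok n (Q2 k) v2"
    using q2_iter[OF k, of v3 "y + 2*x + 2", rule_format, OF cf2' o3] by (auto simp: v3_def v2_def)
  have o5: "ok n (Q1 k) v2"
    by (rule ok_un[OF L(5) cf2' L(11) o4]) simp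
  define v1 where "v1 = v(d(k-1) := x + 1)"
  have cf1': "cfg n v1" using cv L unfolding cfg_def v1_def by auto
  have o6: "ok n (Q1 k) v1"
    using q1_iter[OF k, of v2 "x+1", rule_format, OF cf1' o5] by (auto simp: v1_def v2_def y_def)
  show ?thesis
    by (rule ok_un[OF L(4) cv L(9) o6]) (auto simp: v1_def x_def)
qed




lemma tower_pos: "0 < tower n" by (cases n) auto

lemma base_down: assumes k: "2 \<le> k" "k \<le> n" and cv: "cfg n v"
  and C: "\<forall>v. cfg n v \<longrightarrow> tower (k-1) \<le> v (d (k-1)) \<longrightarrow> ok n (QInit (k-1)) v"
  and x: "tower (k-1) \<le> v (d (k-1))" and c: "1 \<le> v (d k)"
  shows "ok n (QLoop k) v"
proof -
  note L = B_lvl[OF k]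
  have ne: "d k \<noteq> d (k-1)" using k by simp
  define w where "w = v(d k := v (d k) - 1)"
  have cw: "cfg n w" using cv L unfolding cfg_def w_def by auto
  have "ok n (QInit (k-1)) w" using C cw x ne unfolding w_def by auto
  then show ?thesis
    by (rule ok_un[OF L(7) cv L(14)]) (use c in \<open>auto simp: w_def\<close>)
qed

lemma Rlem: assumes k: "2 \<le> k" "k \<le> n"
  and C: "\<forall>v. cfg n v \<longrightarrow> tower (k-1) \<le> v (d (k-1)) \<longrightarrow> ok n (QInit (k-1)) v"
  shows "\<forall>v. cfg n v \<longrightarrow> tower (k-1) \<le> v (d (k-1)) + m \<longrightarrow> 2^m \<le> v (d k) \<longrightarrow> ok n (QLoop k) v"
proof (induction m)
  case 0
  then show ?case using base_down[OF k _ C] by auto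
next
  case (Suc m)
  show ?case
  proof (intro allI impI)
    fix v assume cv: "cfg n v" and x: "tower (k-1) \<le> v (d (k-1)) + Suc m" and c: "2 ^ Suc m \<le> v (d k)"
    have c1: "1 \<le> v (d k)" using c by (metis le_trans one_le_numeral one_le_power)
    show "ok n (QLoop k) v"
    proof (cases "tower (k-1) \<le> v (d (k-1))")
      case True
      then show ?thesis using base_down[OF k cv C True c1] by simp
    next
      case False
      have "ok n (QInit k) v"
      proof (rule round[OF k cv, of m])
        show "2 ^ (m + 1) \<le> v (d k)" using c by simp
        fix v' assume "cfg n v'" "v (d (k-1)) + 1 \<le> v' (d (k-1))" "2^m \<le> v' (d k)"
        then show "ok n (QLoop k) v'" using Suc.IH x by auto
      qed
      then show ?thesis
        by (rule ok_un[OF B_lvl(7)[OF k] cv B_lvl(13)[OF k]]) simp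
    qed
  qed
qed

lemma complete: "1 \<le> k \<Longrightarrow> k \<le> n \<Longrightarrow> \<forall>v. cfg n v \<longrightarrow> tower k \<le> v (d k) \<longrightarrow> ok n (QInit k) v"
proof (induction k)
  case 0
  then show ?case by simp
next
  case (Suc k')
  show ?case
  proof (cases "k' = 0")
    case True
    note O = B_one[of n]
    show ?thesis
    proof (intro allI impI)
      fix v assume cv: "cfg n v" and c: "tower (Suc k') \<le> v (d (Suc k'))"
      define w where "w = v(d 1 := v (d 1) - 2)"
      have cw: "cfg n w" using cv O Suc.prems unfolding cfg_def w_def by auto
      have "ok n QLeaf w" using ok_leaf cw O Suc.prems by auto
      moreover have "QInit 1 \<in> states (B n)" "(QInit 1, \<lambda>x. -2 * e (d 1) x, QLeaf) \<in> urules (B n)"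
        using O Suc.prems by auto
      ultimately have "ok n (QInit 1) v"
        using ok_un[of "QInit 1" n v "\<lambda>x. -2 * e (d 1) x" QLeaf w] cv c True
        by (auto simp: w_def)
      then show "ok n (QInit (Suc k')) v" using True by simp
    qed
  next
    case False
    have k: "2 \<le> Suc k'" "Suc k' \<le> n" using False Suc.prems by auto
    have C: "\<forall>v. cfg n v \<longrightarrow> tower (Suc k' - 1) \<le> v (d (Suc k' - 1)) \<longrightarrow> ok n (QInit (Suc k' - 1)) v"
      using Suc.IH False Suc.prems by simp
    define m where "m = tower k' - 1"
    have tm: "tower k' = m + 1" using tower_pos[of k'] unfolding m_def by simp
    show ?thesis
    proof (intro allI impI)
      fix v assume cv: "cfg n v" and c: "tower (Suc k') \<le> v (d (Suc k'))"
      show "ok n (QInit (Suc k')) v"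
      proof (rule round[OF k cv, of m])
        show "2 ^ (m + 1) \<le> v (d (Suc k'))" using c tm by simp
        fix v' assume "cfg n v'" "v (d (Suc k' - 1)) + 1 \<le> v' (d (Suc k' - 1))" "2^m \<le> v' (d (Suc k'))"
        then show "ok n (QLoop (Suc k')) v'" using Rlem[OF k C, rule_format, of v' m] tm by simp
      qed
    qed
  qed
qed

theorem lemma6p1:
  fixes k :: nat and v0 :: "ctr \<Rightarrow> nat"
  assumes "k \<ge> 1"
    and "\<forall>c. c \<notin> ctrs (B k) \<longrightarrow> v0 c = 0"
    and "\<forall>i. 1 \<le> i \<and> i < k \<longrightarrow> v0 (d i) = 0 \<and> v0 (d' i) = 0"
  shows "(\<exists>t. is_dtree (B k) t \<and> root t = (QInit k, v0) \<and> leaf_covering {QLeaf} t)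
         \<longleftrightarrow> v0 (d k) \<ge> tower k"
proof
  assume "\<exists>t. is_dtree (B k) t \<and> root t = (QInit k, v0) \<and> leaf_covering {QLeaf} t"
  then show "v0 (d k) \<ge> tower k" using soundness[OF assms(1,3)] by blast
next
  assume "v0 (d k) \<ge> tower k"
  then have "ok k (QInit k) v0" using complete[OF assms(1) order_refl] assms(2) unfolding cfg_def by blast
  then show "\<exists>t. is_dtree (B k) t \<and> root t = (QInit k, v0) \<and> leaf_covering {QLeaf} t"
    unfolding ok_def .
qed


end
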